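(* Let $0<u<1$ and let $\delta_1,\ldots,\delta_n$ be independent random variables with $\mathbb{E}[\delta_k]=0$ and $|\delta_k|\le u$ for all $k$. Then for any $\delta\in(0,1)$, with probability at least $1-\delta$, \[ \max_{1\le k\le n}\left|\prod_{j=k+1}^n (1+\delta_j) - 1\right| \le \tilde\gamma_n(\delta), \qquad\text{where}\qquad \tilde\gamma_n(\delta) := \exp\!\left(\frac{\lambda(\delta)\sqrt{n}\,u + n u^2}{1-u}\right) - 1 . \]
   Context: For $\delta\in(0,1)$, $\lambda(\delta)=\sqrt{2\log(2/\delta)}$. An empty product equals $1$. *)

theory Defs
  imports "HOL-Probability.Probability"
begin

definition lam :: "real \<Rightarrow> real" where
  "lam d = sqrt (2 * ln (2 / d))"

definition gamma_tilde :: "nat \<Rightarrow> real \<Rightarrow> real \<Rightarrow> real" where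
  "gamma_tilde n u d = exp ((lam d * sqrt (real n) * u + real n * u\<^sup>2) / (1 - u)) - 1"

end

theory Submission
  imports Defs
begin

lemma (in prob_space) indep_step:
  fixes X :: "nat \<Rightarrow> 'a \<Rightarrow> real"
  assumes indep: "indep_vars (\<lambda>_. borel) X {1..n}" and k: "k \<le> n"
  shows "indep_var borel (\<lambda>x. exp (l * (\<Sum>j\<in>{k+1..n}. X j x)) *
             of_bool (t \<le> (\<Sum>j\<in>{k+1..n}. X j x) \<and> (\<forall>m\<in>{k<..n}. (\<Sum>j\<in>{m+1..n}. X j x) < t)))
           borel (\<lambda>x. exp (l * (\<Sum>j\<in>{1..k}. X j x)))"
proof -
  let ?A = "{k+1..n}" and ?B = "{1..k}"
  define Y1 where "Y1 = (\<lambda>f::nat\<Rightarrow>real. exp (l * (\<Sum>j\<in>{k+1..n}. f j)) *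
             of_bool (t \<le> (\<Sum>j\<in>{k+1..n}. f j) \<and> (\<forall>m\<in>{k<..n}. (\<Sum>j\<in>{m+1..n}. f j) < t)))"
  define Y2 where "Y2 = (\<lambda>f::nat\<Rightarrow>real. exp (l * (\<Sum>j\<in>{1..k}. f j)))"
  have i: "indep_var (PiM ?A (\<lambda>_. borel)) (\<lambda>\<omega>. restrict (\<lambda>i. X i \<omega>) ?A) (PiM ?B (\<lambda>_. borel)) (\<lambda>\<omega>. restrict (\<lambda>i. X i \<omega>) ?B)"
    by (rule indep_var_restrict[OF indep]) (use k in auto)
  have m1: "Y1 \<in> borel_measurable (PiM ?A (\<lambda>_. borel))"
    unfolding Y1_def by measurable
  have m2: "Y2 \<in> borel_measurable (PiM ?B (\<lambda>_. borel))"
    unfolding Y2_def by measurable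
  have "indep_var borel (Y1 \<circ> (\<lambda>\<omega>. restrict (\<lambda>i. X i \<omega>) ?A)) borel (Y2 \<circ> (\<lambda>\<omega>. restrict (\<lambda>i. X i \<omega>) ?B))"
    by (rule indep_var_compose[OF i m1 m2])
  moreover have "Y1 \<circ> (\<lambda>\<omega>. restrict (\<lambda>i. X i \<omega>) ?A) = (\<lambda>x. exp (l * (\<Sum>j\<in>{k+1..n}. X j x)) *
             of_bool (t \<le> (\<Sum>j\<in>{k+1..n}. X j x) \<and> (\<forall>m\<in>{k<..n}. (\<Sum>j\<in>{m+1..n}. X j x) < t)))"
    unfolding Y1_def comp_def by (intro ext) (auto intro!: sum.cong arg_cong[where f=of_bool])
  moreover have "Y2 \<circ> (\<lambda>\<omega>. restrict (\<lambda>i. X i \<omega>) ?B) = (\<lambda>x. exp (l * (\<Sum>j\<in>{1..k}. X j x)))"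
    unfolding Y2_def comp_def by (intro ext) (auto intro!: sum.cong)
  ultimately show ?thesis by simp
qed

lemma (in prob_space) max_ineq:
  fixes X :: "nat \<Rightarrow> 'a \<Rightarrow> real"
  assumes indep: "indep_vars (\<lambda>_. borel) X {1..n}"
   and E0: "\<And>k. k\<in>{1..n} \<Longrightarrow> expectation (X k) = 0"
   and bnd: "\<And>k x. k\<in>{1..n} \<Longrightarrow> x\<in>space M \<Longrightarrow> \<bar>X k x\<bar> \<le> u"
   and u: "u \<ge> 0" and l: "l > 0"
  shows "prob {x\<in>space M. \<exists>k\<in>{0..n}. t \<le> (\<Sum>j\<in>{k+1..n}. X j x)}
          \<le> exp (- l*t + real n * l^2 * u^2 / 2)"
proof -
  have rv[measurable]: "X j \<in> borel_measurable M" if "j \<in> {1..n}" for j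
    using indep that unfolding indep_vars_def by auto
  have intX: "integrable M (X j)" if j: "j \<in> {1..n}" for j
    by (rule integrable_const_bound[where B=u]) (use bnd j in auto)
  define S where "S k x = (\<Sum>j\<in>{k+1..n}. X j x)" for k x
  define R where "R k x = (\<Sum>j\<in>{1..k}. X j x)" for k x
  define T where "T x = (\<Sum>j\<in>{1..n}. X j x)" for x
  define A where "A k x \<longleftrightarrow> t \<le> S k x \<and> (\<forall>m\<in>{k<..n}. S m x < t)" for k x
  have sumbnd: "\<bar>\<Sum>j\<in>J. X j x\<bar> \<le> real n * u" if "J \<subseteq> {1..n}" "x \<in> space M" for J x
  proof -
    have "\<bar>\<Sum>j\<in>J. X j x\<bar> \<le> (\<Sum>j\<in>J. \<bar>X j x\<bar>)" by (rule sum_abs)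
    also have "\<dots> \<le> (\<Sum>j\<in>J. u)" using that bnd by (intro sum_mono) auto
    also have "\<dots> = real (card J) * u" by simp
    also have "\<dots> \<le> real n * u"
      using card_mono[OF _ that(1)] u by (intro mult_right_mono) auto
    finally show ?thesis .
  qed
  have TRS: "T x = R k x + S k x" if "k \<le> n" for k x
  proof -
    have "{1..n} = {1..k} \<union> {k+1..n}" using that by auto
    then show ?thesis unfolding T_def R_def S_def
      by (simp add: sum.union_disjoint ivl_disj_int)
  qed
  have intexp: "integrable M (\<lambda>x. exp (l * (\<Sum>j\<in>J. X j x)) * c x)"
    if "J \<subseteq> {1..n}" "c \<in> borel_measurable M" "\<And>x. x\<in>space M \<Longrightarrow> \<bar>c x\<bar> \<le> 1" for J c
  proof (rule integrable_const_bound[where B="exp (l * (real n * u))"])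
    show "AE x in M. norm (exp (l * (\<Sum>j\<in>J. X j x)) * c x) \<le> exp (l * (real n * u))"
    proof (rule AE_I2)
      fix x assume x: "x \<in> space M"
      have "exp (l * (\<Sum>j\<in>J. X j x)) \<le> exp (l * (real n * u))"
        using sumbnd[OF that(1) x] l by (auto intro!: mult_left_mono)
      moreover have "exp (l * (\<Sum>j\<in>J. X j x)) * \<bar>c x\<bar> \<le> exp (l * (\<Sum>j\<in>J. X j x))"
        using that(3)[OF x] by (intro mult_left_le) auto
      ultimately show "norm (exp (l * (\<Sum>j\<in>J. X j x)) * c x) \<le> exp (l * (real n * u))"
        by (simp only: real_norm_def abs_mult abs_exp_cancel)
    qed
    have "(\<lambda>x. \<Sum>j\<in>J. X j x) \<in> borel_measurable M"
      using that(1) by (intro borel_measurable_sum) (auto intro: rv)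
    then show "(\<lambda>x. exp (l * (\<Sum>j\<in>J. X j x)) * c x) \<in> borel_measurable M"
      using that(2) by measurable
  qed
  have Rge1: "expectation (\<lambda>x. exp (l * R k x)) \<ge> 1" if "k \<le> n" for k
  proof -
    have ER: "expectation (R k) = (\<Sum>j\<in>{1..k}. expectation (X j))"
      unfolding R_def using that
      by (intro Bochner_Integration.integral_sum intX) auto
    have "expectation (\<lambda>x. 1 + l * R k x) = 1 + l * (\<Sum>j\<in>{1..k}. expectation (X j))"
    proof -
      have iR: "integrable M (R k)" unfolding R_def using that by (intro Bochner_Integration.integrable_sum intX) auto
      show ?thesis
        by (subst Bochner_Integration.integral_add) (auto simp: prob_space ER iR)
    qed
    also have "\<dots> = 1" using that E0 by simp
    finally have "expectation (\<lambda>x. 1 + l * R k x) = 1" .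
    moreover have "expectation (\<lambda>x. 1 + l * R k x) \<le> expectation (\<lambda>x. exp (l * R k x))"
      using intexp[of "{1..k}" "\<lambda>_. 1"] that
    proof (intro integral_mono)
      have iR: "integrable M (R k)" unfolding R_def using that by (intro Bochner_Integration.integrable_sum intX) auto
      then show "integrable M (\<lambda>x. 1 + l * R k x)" by (auto simp: prob_space)
    qed (auto simp: R_def exp_ge_add_one_self)
    ultimately show ?thesis by simp
  qed
  have Smeas[measurable]: "S m \<in> borel_measurable M" for m
    unfolding S_def by (intro borel_measurable_sum) (auto intro: rv)
  have Ameas[measurable]: "{x\<in>space M. A k x} \<in> sets M" for k
    unfolding A_def by measurable
  have Apred[measurable]: "Measurable.pred M (A k)" for k
    unfolding pred_def by (rule Ameas)
  have intX1: "integrable M (\<lambda>x. exp (l * X j x))" if j: "j \<in> {1..n}" for j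
  proof (rule integrable_const_bound[where B="exp (l * u)"])
    show "AE x in M. norm (exp (l * X j x)) \<le> exp (l * u)"
      using bnd[OF j] l by (intro AE_I2) (auto intro!: mult_left_mono simp: abs_le_iff)
  qed (use j in measurable)
  have key: "exp (l*t) * prob {x\<in>space M. A k x} \<le> expectation (\<lambda>x. exp (l * T x) * of_bool (A k x))"
    if k: "k \<le> n" for k
  proof -
    have i1: "integrable M (\<lambda>x. exp (l * S k x) * of_bool (A k x))"
      unfolding S_def by (rule intexp) (auto simp: S_def[symmetric])
    have i2: "integrable M (\<lambda>x. exp (l * R k x))"
      using intexp[of "{1..k}" "\<lambda>_. 1"] k by (simp add: R_def)
    have "exp (l*t) * prob {x\<in>space M. A k x} = expectation (\<lambda>x. exp (l*t) * indicator {x\<in>space M. A k x} x)"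
      by (simp add: Int_absorb2)
    also have "\<dots> \<le> expectation (\<lambda>x. exp (l * S k x) * of_bool (A k x))"
    proof (rule integral_mono)
      show "integrable M (\<lambda>x. exp (l*t) * indicator {x\<in>space M. A k x} x)"
        by (intro integrable_mult_right integrable_real_indicator) (auto simp: emeasure_eq_measure)
      show "exp (l*t) * indicator {x\<in>space M. A k x} x \<le> exp (l * S k x) * of_bool (A k x)" for x
        using l by (auto simp: indicator_def A_def intro!: mult_left_mono)
    qed (rule i1)
    also have "\<dots> \<le> expectation (\<lambda>x. exp (l * S k x) * of_bool (A k x)) * expectation (\<lambda>x. exp (l * R k x))"
    proof -
      have "0 \<le> expectation (\<lambda>x. exp (l * S k x) * of_bool (A k x))" by (intro Bochner_Integration.integral_nonneg) auto
      then show ?thesis using Rge1[OF k] by (metis mult.right_neutral mult_left_mono)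
    qed
    also have "\<dots> = expectation (\<lambda>x. exp (l * S k x) * of_bool (A k x) * exp (l * R k x))"
      by (rule indep_var_lebesgue_integral[symmetric, OF _ i1 i2])
         (use indep_step[OF indep k, of l t] in \<open>simp add: S_def R_def A_def\<close>)
    also have "\<dots> = expectation (\<lambda>x. exp (l * T x) * of_bool (A k x))"
      by (intro Bochner_Integration.integral_cong refl) (simp add: TRS[OF k] distrib_left exp_add)
    finally show ?thesis .
  qed
  define E where "E = {x\<in>space M. \<exists>k\<in>{0..n}. t \<le> S k x}"
  have Esub: "E \<subseteq> (\<Union>k\<in>{0..n}. {x\<in>space M. A k x})"
  proof
    fix x assume "x \<in> E"
    then have x: "x \<in> space M" and ex: "\<exists>k\<in>{0..n}. t \<le> S k x" by (auto simp: E_def)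
    define K where "K = {k\<in>{0..n}. t \<le> S k x}"
    have fK: "finite K" "K \<noteq> {}" using ex by (auto simp: K_def)
    define k where "k = Max K"
    have "k \<in> K" using Max_in[OF fK] by (simp add: k_def)
    moreover have "\<forall>m\<in>{k<..n}. S m x < t"
    proof (rule ballI, rule ccontr)
      fix m assume m: "m \<in> {k<..n}" "\<not> S m x < t"
      then have "m \<in> K" unfolding K_def by simp
      then have "m \<le> k" using Max_ge[OF fK(1)] unfolding k_def by blast
      then show False using m(1) by simp
    qed
    ultimately have "A k x" unfolding A_def K_def by blast
    moreover have "k \<in> {0..n}" using \<open>k \<in> K\<close> unfolding K_def by blast
    ultimately show "x \<in> (\<Union>k\<in>{0..n}. {x\<in>space M. A k x})"
      using x by blast
  qed
  have disj0: "False" if "k1 < k2" "k2 \<le> n" "A k1 x" "A k2 x" for k1 k2 x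
  proof -
    have "k2 \<in> {k1<..n}" using that(1,2) by simp
    then have "S k2 x < t" using that(3) unfolding A_def by blast
    moreover have "t \<le> S k2 x" using that(4) unfolding A_def by blast
    ultimately show False by simp
  qed
  have disj: "k1 = k2" if "k1 \<in> {0..n}" "k2 \<in> {0..n}" "A k1 x" "A k2 x" for k1 k2 x
  proof (rule ccontr)
    assume "k1 \<noteq> k2"
    then consider "k1 < k2" | "k2 < k1" by linarith
    then show False
    proof cases
      case 1 then show False using disj0[of k1 k2 x] that by simp
    next
      case 2 then show False using disj0[of k2 k1 x] that by simp
    qed
  qed
  have sum1: "(\<Sum>k\<in>{0..n}. of_bool (A k x)) \<le> (1::real)" for x
  proof (cases "\<exists>k0\<in>{0..n}. A k0 x")
    case True
    then obtain k0 where k0: "k0 \<in> {0..n}" "A k0 x" by blast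
    have fin: "finite {0..n}" by simp
    have "(\<Sum>k\<in>{0..n}. (of_bool (A k x)::real)) = of_bool (A k0 x) + (\<Sum>k\<in>{0..n}-{k0}. (of_bool (A k x)::real))"
      by (rule sum.remove[OF fin k0(1)])
    also have "(\<Sum>k\<in>{0..n}-{k0}. (of_bool (A k x)::real)) = 0"
    proof (rule sum.neutral, rule ballI)
      fix k assume "k \<in> {0..n}-{k0}"
      then have "\<not> A k x" using disj[OF _ k0(1) _ k0(2), of k] by blast
      then show "(of_bool (A k x)::real) = 0" by simp
    qed
    finally show ?thesis using k0 by simp
  next
    case False
    then have "(\<Sum>k\<in>{0..n}. (of_bool (A k x)::real)) = 0" by (intro sum.neutral) auto
    then show ?thesis by simp
  qed
  have iTA: "integrable M (\<lambda>x. exp (l * T x) * of_bool (A k x))" for k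
    unfolding T_def by (rule intexp) (auto simp: T_def[symmetric])
  have Tint: "integrable M (\<lambda>x. exp (l * T x))"
    using intexp[of "{1..n}" "\<lambda>_. 1"] by (simp add: T_def)
  have "exp (l*t) * prob E \<le> exp (l*t) * (\<Sum>k\<in>{0..n}. prob {x\<in>space M. A k x})"
  proof -
    have "prob E \<le> prob (\<Union>k\<in>{0..n}. {x\<in>space M. A k x})"
      by (rule finite_measure_mono[OF Esub]) auto
    also have "\<dots> \<le> (\<Sum>k\<in>{0..n}. prob {x\<in>space M. A k x})"
      by (rule finite_measure_subadditive_finite) auto
    finally show ?thesis by simp
  qed
  also have "\<dots> \<le> (\<Sum>k\<in>{0..n}. expectation (\<lambda>x. exp (l * T x) * of_bool (A k x)))"
    unfolding sum_distrib_left by (intro sum_mono key) auto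
  also have "\<dots> = expectation (\<lambda>x. exp (l * T x) * (\<Sum>k\<in>{0..n}. of_bool (A k x)))"
    unfolding sum_distrib_left
    by (rule Bochner_Integration.integral_sum[symmetric]) (auto intro!: iTA)
  also have "\<dots> \<le> expectation (\<lambda>x. exp (l * T x))"
  proof (rule integral_mono)
    show "integrable M (\<lambda>x. exp (l * T x) * (\<Sum>k\<in>{0..n}. of_bool (A k x)))"
      unfolding T_def
    proof (rule intexp)
      show "(\<lambda>x. \<Sum>k\<in>{0..n}. (of_bool (A k x)::real)) \<in> borel_measurable M"
        by (intro borel_measurable_sum) measurable
      show "\<bar>\<Sum>k\<in>{0..n}. (of_bool (A k x)::real)\<bar> \<le> 1" for x
      proof -
        have "0 \<le> (\<Sum>k\<in>{0..n}. (of_bool (A k x)::real))" by (rule sum_nonneg) simp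
        then show ?thesis unfolding abs_le_iff using sum1[of x] by linarith
      qed
    qed simp
    show "exp (l * T x) * (\<Sum>k\<in>{0..n}. of_bool (A k x)) \<le> exp (l * T x)" for x
      using sum1[of x] by (intro mult_left_le) (auto intro: sum_nonneg)
  qed (rule Tint)
  also have "\<dots> = (\<Prod>j\<in>{1..n}. expectation (\<lambda>x. exp (l * X j x)))"
  proof -
    have ind2: "indep_vars (\<lambda>_. borel) (\<lambda>j x. exp (l * X j x)) {1..n}"
      by (rule indep_vars_compose2[OF indep, where Y="\<lambda>_ y. exp (l * y)" and N="\<lambda>_. borel"]) measurable
    have "expectation (\<lambda>x. exp (l * T x)) = expectation (\<lambda>x. \<Prod>j\<in>{1..n}. exp (l * X j x))"
      unfolding T_def sum_distrib_left exp_sum[OF finite_atLeastAtMost] ..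
    also have "\<dots> = (\<Prod>j\<in>{1..n}. expectation (\<lambda>x. exp (l * X j x)))"
      by (rule indep_vars_lebesgue_integral[OF _ ind2]) (auto intro: intX1)
    finally show ?thesis .
  qed
  also have "\<dots> \<le> (\<Prod>j\<in>{1..n}. exp (l^2 * u^2 / 2))"
  proof (rule prod_mono)
    fix j assume j: "j \<in> {1..n}"
    have ibr: "interval_bounded_random_variable M (X j) (-u) u"
    proof unfold_locales
      show "random_variable borel (X j)" using j by (rule rv)
      show "AE x in M. X j x \<in> {-u..u}"
      proof (rule AE_I2)
        fix x assume "x \<in> space M"
        then have "\<bar>X j x\<bar> \<le> u" by (rule bnd[OF j])
        then show "X j x \<in> {-u..u}" unfolding atLeastAtMost_iff by linarith
      qed
    qed
    have h: "nn_integral M (\<lambda>x. ennreal (exp (l * X j x))) \<le> ennreal (exp (l\<^sup>2 * (u - - u)\<^sup>2 / 8))"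
      by (rule interval_bounded_random_variable.Hoeffdings_lemma_nn_integral_0[OF ibr l E0[OF j]])
    have e: "nn_integral M (\<lambda>x. ennreal (exp (l * X j x))) = ennreal (expectation (\<lambda>x. exp (l * X j x)))"
      by (rule nn_integral_eq_integral[OF intX1[OF j]]) simp
    have q: "l\<^sup>2 * (u - - u)\<^sup>2 / 8 = l^2 * u^2 / 2" by (simp add: power2_eq_square)
    have "expectation (\<lambda>x. exp (l * X j x)) \<le> exp (l^2 * u^2 / 2)"
      using h unfolding e q by (rule ennreal_le_iff[THEN iffD1, rotated]) simp
    moreover have "0 \<le> expectation (\<lambda>x. exp (l * X j x))"
      by (rule Bochner_Integration.integral_nonneg) simp
    ultimately show "0 \<le> expectation (\<lambda>x. exp (l * X j x)) \<and> expectation (\<lambda>x. exp (l * X j x)) \<le> exp (l^2 * u^2 / 2)"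
      by simp
  qed
  also have "\<dots> = exp (real n * l^2 * u^2 / 2)"
  proof -
    have "(\<Prod>j\<in>{1..n}. exp (l^2 * u^2 / 2)) = exp (l^2 * u^2 / 2) ^ n" by simp
    also have "\<dots> = exp (real n * (l^2 * u^2 / 2))" by (rule exp_of_nat_mult[symmetric])
    finally show ?thesis by (simp add: mult.assoc)
  qed
  finally have "exp (l*t) * prob E \<le> exp (real n * l^2 * u^2 / 2)" .
  then have "prob E \<le> exp (-(l*t)) * exp (real n * l^2 * u^2 / 2)"
    by (simp add: exp_minus field_simps)
  then show ?thesis by (simp add: E_def S_def exp_add[symmetric])
qed

lemma exp_abs_bound: "\<bar>exp L - 1\<bar> \<le> exp \<bar>L\<bar> - (1::real)"
proof (cases "L \<ge> 0")
  case True then show ?thesis by simp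
next
  case False
  have "exp L \<ge> 1 + L" by (rule exp_ge_add_one_self)
  moreover have "exp (-L) \<ge> 1 + (-L)" by (rule exp_ge_add_one_self)
  moreover have "exp L \<le> 1" using False by simp
  moreover have "\<bar>exp L - 1\<bar> = 1 - exp L" "\<bar>L\<bar> = - L" using False by auto
  ultimately show ?thesis by linarith
qed

lemma ln_bound:
  fixes a u :: real
  assumes "\<bar>a\<bar> \<le> u" "u < 1"
  shows "\<bar>ln (1 + a) - a\<bar> \<le> u^2 / (1 - u)"
proof -
  have pos: "1 + a > 0" using assms by linarith
  have up: "ln (1 + a) \<le> a" using ln_le_minus_one[OF pos] by simp
  have "ln (1 / (1 + a)) \<le> 1 / (1 + a) - 1" using pos by (intro ln_le_minus_one) simp
  then have lo: "ln (1 + a) \<ge> 1 - 1 / (1 + a)" using pos by (simp add: ln_div)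
  have "a - (1 - 1 / (1 + a)) = a^2 / (1 + a)" using pos by (simp add: field_simps power2_eq_square)
  also have "\<dots> \<le> u^2 / (1 - u)"
  proof (rule frac_le)
    show "a^2 \<le> u^2" using assms(1) by (metis abs_ge_zero abs_le_square_iff order_trans abs_of_nonneg power2_abs abs_abs)
  qed (use assms pos in auto)
  finally show ?thesis using up lo by linarith
qed

lemma det_bound:
  fixes a :: "nat \<Rightarrow> real" and J :: "nat set"
  assumes J: "finite J" "card J \<le> n" and a: "\<And>j. j\<in>J \<Longrightarrow> \<bar>a j\<bar> \<le> u"
    and u: "0 \<le> u" "u < 1" and c: "\<bar>\<Sum>j\<in>J. a j\<bar> \<le> c" "0 \<le> c"
  shows "\<bar>(\<Prod>j\<in>J. 1 + a j) - 1\<bar> \<le> exp ((c + real n * u^2) / (1 - u)) - 1"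
proof -
  define L where "L = (\<Sum>j\<in>J. ln (1 + a j))"
  have pos: "1 + a j > 0" if "j \<in> J" for j using a[OF that] u by linarith
  have P: "(\<Prod>j\<in>J. 1 + a j) = exp L"
    unfolding L_def exp_sum[OF J(1)] by (intro prod.cong refl) (simp add: pos)
  have "\<bar>L\<bar> = \<bar>(\<Sum>j\<in>J. a j) + (\<Sum>j\<in>J. ln (1 + a j) - a j)\<bar>"
    unfolding L_def sum_subtractf by simp
  also have "\<dots> \<le> \<bar>\<Sum>j\<in>J. a j\<bar> + \<bar>\<Sum>j\<in>J. ln (1 + a j) - a j\<bar>" by (rule abs_triangle_ineq)
  also have "\<bar>\<Sum>j\<in>J. ln (1 + a j) - a j\<bar> \<le> (\<Sum>j\<in>J. \<bar>ln (1 + a j) - a j\<bar>)" by (rule sum_abs)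
  also have "\<dots> \<le> (\<Sum>j\<in>J. u^2 / (1 - u))" by (intro sum_mono ln_bound a u)
  also have "\<dots> = real (card J) * (u^2 / (1 - u))" by simp
  also have "\<dots> \<le> real n * (u^2 / (1 - u))" using J u by (intro mult_right_mono) auto
  finally have "\<bar>L\<bar> \<le> c + real n * u^2 / (1 - u)" using c by simp
  also have "\<dots> \<le> (c + real n * u^2) / (1 - u)"
  proof -
    have "c * u \<ge> 0" using c u by simp
    then have "c * (1 - u) \<le> c" by (simp add: right_diff_distrib)
    then have "c \<le> c / (1 - u)" using u by (simp add: le_divide_eq)
    then show ?thesis by (simp add: add_divide_distrib)
  qed
  finally have "\<bar>L\<bar> \<le> (c + real n * u^2) / (1 - u)" .
  then have "exp \<bar>L\<bar> - 1 \<le> exp ((c + real n * u^2) / (1 - u)) - 1" by simp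
  then show ?thesis unfolding P using exp_abs_bound[of L] by linarith
qed

theorem lemma3p2:
  fixes M :: "'a measure" and \<delta>s :: "nat \<Rightarrow> 'a \<Rightarrow> real"
    and u d :: real and n :: nat
  assumes "prob_space M"
    and "0 < u" and "u < 1"
    and "prob_space.indep_vars M (\<lambda>_. borel) \<delta>s {1..n}"
    and "\<And>k. k \<in> {1..n} \<Longrightarrow> integrable M (\<delta>s k)"
    and "\<And>k. k \<in> {1..n} \<Longrightarrow> prob_space.expectation M (\<delta>s k) = 0"
    and "\<And>k x. k \<in> {1..n} \<Longrightarrow> x \<in> space M \<Longrightarrow> \<bar>\<delta>s k x\<bar> \<le> u"
    and "0 < d" and "d < 1"
  shows "measure M {x \<in> space M. \<forall>k\<in>{1..n}.
            \<bar>(\<Prod>j\<in>{k+1..n}. 1 + \<delta>s j x) - 1\<bar> \<le> gamma_tilde n u d} \<ge> 1 - d"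
proof -
  interpret prob_space M by (rule assms(1))
  note indep = assms(4) and E0 = assms(6) and bnd = assms(7)
  have rv[measurable]: "\<delta>s j \<in> borel_measurable M" if "j \<in> {1..n}" for j
    using indep that unfolding indep_vars_def by auto
  define G where "G = {x \<in> space M. \<forall>k\<in>{1..n}.
            \<bar>(\<Prod>j\<in>{k+1..n}. 1 + \<delta>s j x) - 1\<bar> \<le> gamma_tilde n u d}"
  have Pm[measurable]: "(\<lambda>x. \<Prod>j\<in>{k+1..n}. 1 + \<delta>s j x) \<in> borel_measurable M" for k
    by (intro borel_measurable_prod) (auto intro: rv)
  have Sm[measurable]: "(\<lambda>x. \<Sum>j\<in>{k+1..n}. \<delta>s j x) \<in> borel_measurable M" for k
    by (intro borel_measurable_sum) (auto intro: rv)
  have Gm: "G \<in> sets M" unfolding G_def by measurable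
  show ?thesis
  proof (cases "n = 0")
    case True
    then have "G = space M" unfolding G_def by auto
    then show ?thesis using Gm assms(8) unfolding G_def[symmetric] by (simp add: prob_space)
  next
    case False
    have lampos: "lam d > 0"
    proof -
      have "2 / d > 1" using assms(8,9) by (simp add: field_simps)
      then have "ln (2 / d) > 0" by (rule ln_gt_zero)
      then show ?thesis unfolding lam_def by simp
    qed
    define t where "t = lam d * sqrt (real n) * u"
    define l where "l = t / (real n * u^2)"
    have npos: "real n > 0" using False by simp
    have tpos: "t > 0" unfolding t_def using lampos npos assms(2) by simp
    have lpos: "l > 0" unfolding l_def using tpos npos assms(2) by simp
    have lam2: "(lam d)^2 = 2 * ln (2 / d)"
    proof -
      have "2 / d > 1" using assms(8,9) by (simp add: field_simps)
      then have "ln (2 / d) > 0" by (rule ln_gt_zero)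
      then show ?thesis unfolding lam_def by simp
    qed
    have expo: "exp (- l*t + real n * l^2 * u^2 / 2) = d / 2"
    proof -
      have "- l*t + real n * l^2 * u^2 / 2 = -(t^2) / (2 * real n * u^2)"
        unfolding l_def using npos assms(2) by (simp add: field_simps power2_eq_square)
      also have "t^2 = (lam d)^2 * real n * u^2"
        unfolding t_def using npos by (simp add: power_mult_distrib)
      also have "- ((lam d)^2 * real n * u^2) / (2 * real n * u^2) = - ln (2 / d)"
        unfolding lam2 using npos assms(2) by (simp add: field_simps)
      finally show ?thesis using assms(8) by (simp add: ln_div exp_diff)
    qed
    define E1 where "E1 = {x\<in>space M. \<exists>k\<in>{0..n}. t \<le> (\<Sum>j\<in>{k+1..n}. \<delta>s j x)}"
    define E2 where "E2 = {x\<in>space M. \<exists>k\<in>{0..n}. t \<le> (\<Sum>j\<in>{k+1..n}. - \<delta>s j x)}"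
    have E1m: "E1 \<in> sets M" unfolding E1_def by measurable
    have E2m: "E2 \<in> sets M" unfolding E2_def sum_negf by measurable
    have P1: "prob E1 \<le> d / 2"
      unfolding E1_def expo[symmetric]
      by (rule max_ineq[OF indep E0 bnd _ lpos]) (use assms(2) in auto)
    have P2: "prob E2 \<le> d / 2"
      unfolding E2_def expo[symmetric]
    proof (rule max_ineq[OF _ _ _ _ lpos])
      show "indep_vars (\<lambda>_. borel) (\<lambda>j x. - \<delta>s j x) {1..n}"
        by (rule indep_vars_compose2[OF indep, where Y="\<lambda>_ y. - y" and N="\<lambda>_. borel"]) measurable
      show "expectation (\<lambda>x. - \<delta>s k x) = 0" if "k \<in> {1..n}" for k
        using E0[OF that] by simp
      show "\<bar>- \<delta>s k x\<bar> \<le> u" if "k \<in> {1..n}" "x \<in> space M" for k x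
        using bnd[OF that] by simp
    qed (use assms(2) in auto)
    have sub: "space M - (E1 \<union> E2) \<subseteq> G"
    proof
      fix x assume x: "x \<in> space M - (E1 \<union> E2)"
      show "x \<in> G" unfolding G_def
      proof (intro CollectI conjI ballI)
        show "x \<in> space M" using x by simp
        fix k assume k: "k \<in> {1..n}"
        have k0: "k \<in> {0..n}" using k by simp
        have nE: "x \<notin> E1" "x \<notin> E2" "x \<in> space M" using x by auto
        have s1: "\<not> t \<le> (\<Sum>j\<in>{k+1..n}. \<delta>s j x)" using nE(1,3) k0 unfolding E1_def by blast
        have s2: "\<not> t \<le> (\<Sum>j\<in>{k+1..n}. - \<delta>s j x)" using nE(2,3) k0 unfolding E2_def by blast
        have "\<bar>\<Sum>j\<in>{k+1..n}. \<delta>s j x\<bar> \<le> t" using s1 s2 unfolding sum_negf by linarith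
        then have "\<bar>(\<Prod>j\<in>{k+1..n}. 1 + \<delta>s j x) - 1\<bar> \<le> exp ((t + real n * u^2) / (1 - u)) - 1"
          by (intro det_bound) (use k x bnd assms(2,3) tpos in auto)
        then show "\<bar>(\<Prod>j\<in>{k+1..n}. 1 + \<delta>s j x) - 1\<bar> \<le> gamma_tilde n u d"
          unfolding gamma_tilde_def t_def .
      qed
    qed
    have "1 - d \<le> 1 - (prob E1 + prob E2)" using P1 P2 by simp
    also have "\<dots> \<le> 1 - prob (E1 \<union> E2)"
      using measure_subadditive[OF E1m E2m] by simp
    also have "\<dots> = prob (space M - (E1 \<union> E2))"
      using prob_compl[of "E1 \<union> E2"] E1m E2m by simp
    also have "\<dots> \<le> prob G"
      by (rule finite_measure_mono[OF sub Gm])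
    finally show ?thesis unfolding G_def .
  qed
qed

end
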